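(* Let $d\ge 3$, $n\ge 2$, and let $F$ be an $n$-lattice framework in $\mathbb{R}^d$. If for every $1\le i\le d$ and every $0\le c\le n-1$ the framework $F'_{i,c}$ in $\mathbb{R}^{d-1}$ is infinitesimally rigid, then $F$ is infinitesimally rigid.
   Context: A framework in $\mathbb{R}^d$ is a finite graph whose vertices (joints) are distinct points of $\mathbb{R}^d$ and whose edges (bars) are segments between pairs of joints. An infinitesimal motion of $\mathbb{R}^d$ is a map $f:\mathbb{R}^d\to\mathbb{R}^d$ with $(f(x)-f(y))\cdot(x-y)=0$ for all $x,y$. For a framework $F$ with joint set $X$, an infinitesimal motion of $F$ is a map $g:X\to\mathbb{R}^d$ with $(g(x)-g(y))\cdot(x-y)=0$ for every bar $xy$; $F$ is infinitesimally rigid if every infinitesimal motion of $F$ is the restriction to $X$ of an infinitesimal motion of $\mathbb{R}^d$. An $n$-lattice framework in $\mathbb{R}^d$ is a framework whose joints are the points $(x_1,\ldots,x_d)$ with all $x_i\in\{0,1,\ldots,n-1\}$ (bars arbitrary). For such $F$, $F_{i,c}$ is the subframework induced by all joints whose $i$-th coordinate equals $c$, and $F'_{i,c}$ is the framework in $\mathbb{R}^{d-1}$ obtained from $F_{i,c}$ by deleting the $i$-th coordinate of every joint (keeping the same bars); it is an $n$-lattice framework in $\mathbb{R}^{d-1}$. *)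

theory Defs
  imports Complex_Main
begin

text \<open>Points of R^d are represented as functions nat => real that vanish at
  all coordinates >= d (coordinates are indexed 0..d-1).\<close>

definition rvec :: "nat \<Rightarrow> (nat \<Rightarrow> real) set" where
  "rvec d = {x. \<forall>i\<ge>d. x i = 0}"

definition ip :: "nat \<Rightarrow> (nat \<Rightarrow> real) \<Rightarrow> (nat \<Rightarrow> real) \<Rightarrow> real" where
  "ip d x y = (\<Sum>i<d. x i * y i)"

definition space_motion :: "nat \<Rightarrow> ((nat \<Rightarrow> real) \<Rightarrow> (nat \<Rightarrow> real)) \<Rightarrow> bool" where
  "space_motion d f \<longleftrightarrow>
     (\<forall>x\<in>rvec d. f x \<in> rvec d) \<and>
     (\<forall>x\<in>rvec d. \<forall>y\<in>rvec d. ip d (f x - f y) (x - y) = 0)"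

definition framework_motion ::
  "nat \<Rightarrow> (nat \<Rightarrow> real) set \<Rightarrow> ((nat \<Rightarrow> real) \<times> (nat \<Rightarrow> real)) set
   \<Rightarrow> ((nat \<Rightarrow> real) \<Rightarrow> (nat \<Rightarrow> real)) \<Rightarrow> bool" where
  "framework_motion d X E g \<longleftrightarrow>
     (\<forall>x\<in>X. g x \<in> rvec d) \<and>
     (\<forall>(x, y)\<in>E. ip d (g x - g y) (x - y) = 0)"

definition inf_rigid ::
  "nat \<Rightarrow> (nat \<Rightarrow> real) set \<Rightarrow> ((nat \<Rightarrow> real) \<times> (nat \<Rightarrow> real)) set \<Rightarrow> bool" where
  "inf_rigid d X E \<longleftrightarrow>
     (\<forall>g. framework_motion d X E g \<longrightarrow>
        (\<exists>f. space_motion d f \<and> (\<forall>x\<in>X. g x = f x)))"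

definition lattice_pts :: "nat \<Rightarrow> nat \<Rightarrow> (nat \<Rightarrow> real) set" where
  "lattice_pts d n = {x. (\<forall>i<d. \<exists>k<n. x i = real k) \<and> (\<forall>i\<ge>d. x i = 0)}"

definition lattice_framework ::
  "nat \<Rightarrow> nat \<Rightarrow> (nat \<Rightarrow> real) set \<Rightarrow> ((nat \<Rightarrow> real) \<times> (nat \<Rightarrow> real)) set \<Rightarrow> bool" where
  "lattice_framework d n X E \<longleftrightarrow>
     X = lattice_pts d n \<and> E \<subseteq> {(x, y). x \<in> X \<and> y \<in> X \<and> x \<noteq> y}"

definition slice_joints :: "nat \<Rightarrow> nat \<Rightarrow> (nat \<Rightarrow> real) set \<Rightarrow> (nat \<Rightarrow> real) set" where
  "slice_joints i c X = {x\<in>X. x i = real c}"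

definition slice_bars ::
  "nat \<Rightarrow> nat \<Rightarrow> (nat \<Rightarrow> real) set \<Rightarrow> ((nat \<Rightarrow> real) \<times> (nat \<Rightarrow> real)) set
   \<Rightarrow> ((nat \<Rightarrow> real) \<times> (nat \<Rightarrow> real)) set" where
  "slice_bars i c X E = {(x, y)\<in>E. x \<in> slice_joints i c X \<and> y \<in> slice_joints i c X}"

definition del_coord :: "nat \<Rightarrow> (nat \<Rightarrow> real) \<Rightarrow> (nat \<Rightarrow> real)" where
  "del_coord i x = (\<lambda>j. if j < i then x j else x (Suc j))"

definition proj_joints :: "nat \<Rightarrow> nat \<Rightarrow> (nat \<Rightarrow> real) set \<Rightarrow> (nat \<Rightarrow> real) set" where
  "proj_joints i c X = del_coord i ` slice_joints i c X"

definition proj_bars ::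
  "nat \<Rightarrow> nat \<Rightarrow> (nat \<Rightarrow> real) set \<Rightarrow> ((nat \<Rightarrow> real) \<times> (nat \<Rightarrow> real)) set
   \<Rightarrow> ((nat \<Rightarrow> real) \<times> (nat \<Rightarrow> real)) set" where
  "proj_bars i c X E = (\<lambda>(x, y). (del_coord i x, del_coord i y)) ` slice_bars i c X E"

end

theory Submission
  imports Defs "HOL-Library.Function_Algebras"
begin

definition ev :: "nat \<Rightarrow> nat \<Rightarrow> real" where
  "ev k = (\<lambda>l. if l = k then 1 else 0)"

lemma ip_ev: "j < m \<Longrightarrow> ip m u (ev j) = u j"
  unfolding ip_def ev_def by (simp add: if_distrib[of "\<lambda>t. _ * t"] cong: if_cong)

lemma ip_diff1: "ip m (u - v) w = ip m u w - ip m v w"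
  unfolding ip_def by (simp add: algebra_simps sum_subtractf)
lemma ip_diff2: "ip m w (u - v) = ip m w u - ip m w v"
  unfolding ip_def by (simp add: algebra_simps sum_subtractf)
lemma ip_add1: "ip m (u + v) w = ip m u w + ip m v w"
  unfolding ip_def by (simp add: algebra_simps sum.distrib)
lemma ip_add2: "ip m w (u + v) = ip m w u + ip m w v"
  unfolding ip_def by (simp add: algebra_simps sum.distrib)
lemma ip_comm: "ip m u v = ip m v u"
  unfolding ip_def by (simp add: mult.commute)

lemma rvec_0: "0 \<in> rvec m" by (simp add: rvec_def)
lemma rvec_ev: "j < m \<Longrightarrow> ev j \<in> rvec m" by (simp add: rvec_def ev_def)
lemma rvec_add: "x \<in> rvec m \<Longrightarrow> y \<in> rvec m \<Longrightarrow> x + y \<in> rvec m" by (simp add: rvec_def)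

lemma sm_Q:
  assumes sm: "space_motion m f" and x: "x \<in> rvec m" and y: "y \<in> rvec m"
  shows "ip m (f x - f 0) y + ip m (f y - f 0) x = 0"
proof -
  have h1: "ip m (f x - f y) (x - y) = 0" using sm x y by (simp add: space_motion_def)
  have h2: "ip m (f x - f 0) x = 0" using sm x rvec_0[of m] unfolding space_motion_def by (metis diff_zero)
  have h3: "ip m (f y - f 0) y = 0" using sm y rvec_0[of m] unfolding space_motion_def by (metis diff_zero)
  have e: "f x - f y = (f x - f 0) - (f y - f 0)" by simp
  have "ip m (f x - f y) (x - y) = ip m (f x - f 0) x - ip m (f x - f 0) y - ip m (f y - f 0) x + ip m (f y - f 0) y"
    unfolding e by (simp add: ip_diff1 ip_diff2)
  with h1 h2 h3 show ?thesis by simp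
qed

lemma sm_add:
  assumes sm: "space_motion m f" and y: "y \<in> rvec m" and z: "z \<in> rvec m" and j: "j < m"
  shows "f (y + z) j - f y j = f z j - f 0 j"
proof -
  have ej: "ev j \<in> rvec m" using j by (rule rvec_ev)
  have "ip m (f (y+z) - f 0) (ev j) = - ip m (f (ev j) - f 0) (y + z)"
    using sm_Q[OF sm rvec_add[OF y z] ej] by simp
  moreover have "ip m (f y - f 0) (ev j) = - ip m (f (ev j) - f 0) y"
    using sm_Q[OF sm y ej] by simp
  moreover have "ip m (f z - f 0) (ev j) = - ip m (f (ev j) - f 0) z"
    using sm_Q[OF sm z ej] by simp
  ultimately have "ip m (f (y+z) - f 0) (ev j) = ip m (f y - f 0) (ev j) + ip m (f z - f 0) (ev j)"
    by (simp add: ip_add2)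
  then show ?thesis using j by (simp add: ip_ev)
qed

lemma sm_skew:
  assumes sm: "space_motion m f" and j: "j < m" and k: "k < m"
  shows "f (ev k) j - f 0 j = - (f (ev j) k - f 0 k)"
  using sm_Q[OF sm rvec_ev[OF k] rvec_ev[OF j]] j k by (simp add: ip_ev)

definition sh :: "nat \<Rightarrow> nat \<Rightarrow> nat" where "sh i j = (if j < i then j else j - 1)"
definition ins :: "nat \<Rightarrow> real \<Rightarrow> (nat \<Rightarrow> real) \<Rightarrow> (nat \<Rightarrow> real)" where
  "ins i c y = (\<lambda>j. if j < i then y j else if j = i then c else y (j - 1))"

lemma del_sh: "j \<noteq> i \<Longrightarrow> del_coord i u (sh i j) = u j"
  by (auto simp: del_coord_def sh_def)
lemma del_ins: "del_coord i (ins i c y) = y"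
  by (auto simp: del_coord_def ins_def)
lemma ins_del: "x i = c \<Longrightarrow> ins i c (del_coord i x) = x"
  by (auto simp: del_coord_def ins_def fun_eq_iff)
lemma del_diff: "del_coord i (u - v) = del_coord i u - del_coord i v"
  by (auto simp: del_coord_def)
lemma del_add_ev: "k \<noteq> i \<Longrightarrow> del_coord i (x + ev k) = del_coord i x + ev (sh i k)"
  by (auto simp: del_coord_def ev_def sh_def fun_eq_iff)
lemma sh_less: "j \<noteq> i \<Longrightarrow> j < d \<Longrightarrow> i < d \<Longrightarrow> sh i j < d - 1"
  by (auto simp: sh_def)

lemma sum_del: "i < Suc m \<Longrightarrow> (\<Sum>j<m. f (if j < i then j else Suc j)) = (\<Sum>j<Suc m. f j) - (f i :: real)"
proof (induction m arbitrary: i)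
  case 0 then show ?case by simp
next
  case (Suc m)
  show ?case
  proof (cases "i < Suc m")
    case True
    then show ?thesis using Suc.IH[OF True] by simp
  next
    case False
    then have "i = Suc m" using Suc.prems by simp
    then show ?thesis by simp
  qed
qed

lemma ip_del: assumes "i < d" shows "ip (d - 1) (del_coord i u) (del_coord i v) = ip d u v - u i * v i"
proof -
  obtain m where d: "d = Suc m" using assms by (cases d) auto
  have "ip (d - 1) (del_coord i u) (del_coord i v) = (\<Sum>j<m. (\<lambda>l. u l * v l) (if j < i then j else Suc j))"
    unfolding ip_def d by (rule sum.cong) (auto simp: del_coord_def)
  also have "\<dots> = ip d u v - u i * v i" using assms unfolding d ip_def by (subst sum_del) auto
  finally show ?thesis .
qed


lemma L_rvec: "x \<in> lattice_pts d n \<Longrightarrow> x \<in> rvec d"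
  by (simp add: lattice_pts_def rvec_def)

lemma del_rvec: "x \<in> rvec d \<Longrightarrow> i < d \<Longrightarrow> del_coord i x \<in> rvec (d - 1)"
  by (auto simp: rvec_def del_coord_def)

lemma slice_lemma:
  assumes X: "X = lattice_pts d n"
    and gm: "framework_motion d X E g"
    and rig: "inf_rigid (d - 1) (proj_joints i c X) (proj_bars i c X E)"
    and i: "i < d"
  shows "\<exists>a. (\<forall>j k. j < d \<longrightarrow> k < d \<longrightarrow> j \<noteq> i \<longrightarrow> k \<noteq> i \<longrightarrow> a j k = - a k j) \<and>
    (\<forall>j k x. j < d \<longrightarrow> k < d \<longrightarrow> j \<noteq> i \<longrightarrow> k \<noteq> i \<longrightarrow> x \<in> X \<longrightarrow> x i = real c \<longrightarrow>
       x + ev k \<in> X \<longrightarrow> g (x + ev k) j - g x j = a j k)"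
proof -
  define h where "h y = del_coord i (g (ins i (real c) y))" for y
  have hx: "h (del_coord i x) = del_coord i (g x)" if "x i = real c" for x
    using that by (simp add: h_def ins_del)
  have fm: "framework_motion (d - 1) (proj_joints i c X) (proj_bars i c X E) h"
    unfolding framework_motion_def
  proof (intro conjI ballI)
    fix y assume "y \<in> proj_joints i c X"
    then obtain x where x: "x \<in> X" "x i = real c" "y = del_coord i x"
      by (auto simp: proj_joints_def slice_joints_def)
    have "g x \<in> rvec d" using gm x by (simp add: framework_motion_def)
    then show "h y \<in> rvec (d - 1)" using x hx del_rvec i by simp
  next
    fix p assume "p \<in> proj_bars i c X E"
    then obtain x1 x2 where p: "p = (del_coord i x1, del_coord i x2)" and e: "(x1, x2) \<in> E"
      and s: "x1 i = real c" "x2 i = real c"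
      by (auto simp: proj_bars_def slice_bars_def slice_joints_def)
    have "ip d (g x1 - g x2) (x1 - x2) = 0" using gm e by (auto simp: framework_motion_def)
    then have "ip (d - 1) (del_coord i (g x1 - g x2)) (del_coord i (x1 - x2)) = 0"
      using s ip_del[OF i, of "g x1 - g x2" "x1 - x2"] by simp
    then show "case p of (y1, y2) \<Rightarrow> ip (d - 1) (h y1 - h y2) (y1 - y2) = 0"
      using p s hx by (simp add: del_diff)
  qed
  then obtain f where sm: "space_motion (d - 1) f" and ag: "\<forall>y\<in>proj_joints i c X. h y = f y"
    using rig unfolding inf_rigid_def by blast
  define a where "a j k = f (ev (sh i k)) (sh i j) - f 0 (sh i j)" for j k
  show ?thesis
  proof (intro exI conjI allI impI)
    fix j k assume "j < d" "k < d" "j \<noteq> i" "k \<noteq> i"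
    then show "a j k = - a k j" unfolding a_def using sm_skew[OF sm] sh_less i by simp
  next
    fix j k x assume jk: "j < d" "k < d" "j \<noteq> i" "k \<noteq> i" and x: "x \<in> X" "x i = real c"
      and x1: "x + ev k \<in> X"
    have x1i: "(x + ev k) i = real c" using x jk by (simp add: ev_def)
    have pj: "del_coord i x \<in> proj_joints i c X" using x by (auto simp: proj_joints_def slice_joints_def)
    have pj1: "del_coord i (x + ev k) \<in> proj_joints i c X" using x1 x1i by (auto simp: proj_joints_def slice_joints_def)
    have yr: "del_coord i x \<in> rvec (d - 1)" using x X i L_rvec del_rvec by blast
    have "g (x + ev k) j - g x j = del_coord i (g (x + ev k)) (sh i j) - del_coord i (g x) (sh i j)"
      using jk by (simp add: del_sh)
    also have "\<dots> = f (del_coord i x + ev (sh i k)) (sh i j) - f (del_coord i x) (sh i j)"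
      using hx[of x, OF x(2)] hx[of "x + ev k", OF x1i] ag pj pj1 jk by (simp add: del_add_ev)
    also have "\<dots> = a j k" unfolding a_def
      by (rule sm_add[OF sm yr rvec_ev]) (use sh_less i jk in auto)
    finally show "g (x + ev k) j - g x j = a j k" .
  qed
qed


lemma L_intro: "(\<forall>l<d. \<exists>m<n. y l = real m) \<Longrightarrow> (\<forall>l\<ge>d. y l = 0) \<Longrightarrow> y \<in> lattice_pts d n"
  by (simp add: lattice_pts_def)
lemma L_coord: "x \<in> lattice_pts d n \<Longrightarrow> l < d \<Longrightarrow> \<exists>m<n. x l = real m"
  by (simp add: lattice_pts_def)
lemma L_out: "x \<in> lattice_pts d n \<Longrightarrow> d \<le> l \<Longrightarrow> x l = 0"
  by (simp add: lattice_pts_def)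
lemma L_add_ev:
  assumes x: "x \<in> lattice_pts d n" and k: "k < d" and m: "x k = real m" and mn: "Suc m < n"
  shows "x + ev k \<in> lattice_pts d n"
proof (rule L_intro)
  show "\<forall>l<d. \<exists>m<n. (x + ev k) l = real m"
  proof (intro allI impI)
    fix l assume l: "l < d"
    show "\<exists>m<n. (x + ev k) l = real m"
    proof (cases "l = k")
      case True
      then have "(x + ev k) l = real (Suc m)" using m by (simp add: ev_def)
      then show ?thesis using mn by blast
    next
      case False
      then have "(x + ev k) l = x l" by (simp add: ev_def)
      then show ?thesis using L_coord[OF x l] by simp
    qed
  qed
  show "\<forall>l\<ge>d. (x + ev k) l = 0" using L_out[OF x] k by (simp add: ev_def)
qed
lemma L_pt: assumes "c < n" "i < d" shows "(\<lambda>l. if l = i then real c else 0) \<in> lattice_pts d n"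
proof (rule L_intro)
  have "0 < n" using assms by simp
  then show "\<forall>l<d. \<exists>m<n. (\<lambda>l. if l = i then real c else 0) l = real m"
    using assms by (metis of_nat_0)
qed (use assms in simp)
lemma L_zero: "0 < n \<Longrightarrow> (0 :: nat \<Rightarrow> real) \<in> lattice_pts d n"
  by (rule L_intro) (metis of_nat_0 zero_fun_def, simp)

lemma skew_quad:
  assumes "\<And>j k. j < d \<Longrightarrow> k < d \<Longrightarrow> M j k = - M k j"
  shows "(\<Sum>j<d. (\<Sum>k<d. M j k * w k) * w j) = (0::real)"
proof -
  let ?S = "(\<Sum>j<d. (\<Sum>k<d. M j k * w k) * w j)"
  have e1: "?S = (\<Sum>j<d. \<Sum>k<d. M j k * w k * w j)" by (simp only: sum_distrib_right)
  also have "\<dots> = (\<Sum>k<d. \<Sum>j<d. M j k * w k * w j)" by (rule sum.swap)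
  also have "\<dots> = (\<Sum>k<d. \<Sum>j<d. - (M k j * w j * w k))"
  proof (intro sum.cong refl)
    fix k j assume "k \<in> {..<d}" "j \<in> {..<d}"
    then have "j < d" "k < d" by auto
    then have "M j k = - M k j" by (rule assms)
    then show "M j k * w k * w j = - (M k j * w j * w k)" by simp
  qed
  also have "\<dots> = - (\<Sum>k<d. \<Sum>j<d. M k j * w j * w k)" by (simp only: sum_negf)
  also have "\<dots> = - ?S" using e1 by simp
  finally show ?thesis by simp
qed


theorem corollary7:
  fixes d n :: nat
    and X :: "(nat \<Rightarrow> real) set"
    and E :: "((nat \<Rightarrow> real) \<times> (nat \<Rightarrow> real)) set"
  assumes "d \<ge> 3" and "n \<ge> 2"
    and "lattice_framework d n X E"
    and "\<forall>i<d. \<forall>c<n. inf_rigid (d - 1) (proj_joints i c X) (proj_bars i c X E)"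
  shows "inf_rigid d X E"
  unfolding inf_rigid_def
proof (intro allI impI)
  have X: "X = lattice_pts d n" using assms(3) by (simp add: lattice_framework_def)
  have n0: "0 < n" "Suc 0 < n" using assms(2) by auto
  fix g assume gm: "framework_motion d X E g"
  define D where "D k j x = g (x + ev k) j - g x j" for k j x
  define Q where "Q i c a \<longleftrightarrow>
    (\<forall>j k. j < d \<longrightarrow> k < d \<longrightarrow> j \<noteq> i \<longrightarrow> k \<noteq> i \<longrightarrow> a j k = - a k j) \<and>
    (\<forall>j k x. j < d \<longrightarrow> k < d \<longrightarrow> j \<noteq> i \<longrightarrow> k \<noteq> i \<longrightarrow> x \<in> X \<longrightarrow> x i = real c \<longrightarrow>
       x + ev k \<in> X \<longrightarrow> D k j x = a j k)" for i c and a :: "nat \<Rightarrow> nat \<Rightarrow> real"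
  have ex: "\<exists>a. fst p < d \<longrightarrow> snd p < n \<longrightarrow> Q (fst p) (snd p) a" for p
  proof (cases "fst p < d \<and> snd p < n")
    case True
    then have r: "inf_rigid (d - 1) (proj_joints (fst p) (snd p) X) (proj_bars (fst p) (snd p) X E)"
      using assms(4) by blast
    show ?thesis using slice_lemma[OF X gm r] True unfolding Q_def D_def by blast
  qed blast
  have ex2: "\<forall>p. \<exists>a. fst p < d \<longrightarrow> snd p < n \<longrightarrow> Q (fst p) (snd p) a" using ex by blast
  obtain F where F: "\<forall>p. fst p < d \<longrightarrow> snd p < n \<longrightarrow> Q (fst p) (snd p) (F p)"
    using choice[OF ex2] by blast
  define A where "A i c = F (i, c)" for i c
  have A: "\<And>i c. i < d \<Longrightarrow> c < n \<Longrightarrow>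
    (\<forall>j k. j < d \<longrightarrow> k < d \<longrightarrow> j \<noteq> i \<longrightarrow> k \<noteq> i \<longrightarrow> A i c j k = - A i c k j) \<and>
    (\<forall>j k x. j < d \<longrightarrow> k < d \<longrightarrow> j \<noteq> i \<longrightarrow> k \<noteq> i \<longrightarrow> x \<in> X \<longrightarrow> x i = real c \<longrightarrow>
       x + ev k \<in> X \<longrightarrow> D k j x = A i c j k)"
  proof -
    fix i c assume "i < d" "c < n"
    then have "Q i c (A i c)" using F[rule_format, of "(i, c)"] unfolding A_def by simp
    then show "?thesis i c" unfolding Q_def by blast
  qed
  have Ask: "A i c j k = - A i c k j"
    if "i < d" "c < n" "j < d" "k < d" "j \<noteq> i" "k \<noteq> i" for i c j k
    using A[OF that(1,2)] that by blast
  have AD: "D k j x = A i c j k"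
    if "i < d" "c < n" "j < d" "k < d" "j \<noteq> i" "k \<noteq> i" "x \<in> X" "x i = real c" "x + ev k \<in> X"
    for i c j k x
    using A[OF that(1,2)] that by blast
  define pt where "pt (i::nat) (c::nat) = (\<lambda>l::nat. if l = i then real c else (0::real))" for i c
  have step: "A i (Suc c) j k - A i c j k = A k 1 j i - A k 0 j i"
    if d: "i < d" "j < d" "k < d" "i \<noteq> j" "i \<noteq> k" "j \<noteq> k" and c: "Suc c < n" for i j k c
  proof -
    define p where "p = pt i c"
    have p: "p \<in> X" unfolding X p_def pt_def using c d by (intro L_pt) auto
    have pi: "p + ev i \<in> X" unfolding X
      by (rule L_add_ev[of _ _ _ _ c]) (use p X d c in \<open>auto simp: p_def pt_def\<close>)
    have pk: "p + ev k \<in> X" unfolding X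
      by (rule L_add_ev[of _ _ _ _ 0]) (use p X d c n0 in \<open>auto simp: p_def pt_def\<close>)
    have pik: "p + ev i + ev k \<in> X" unfolding X
      by (rule L_add_ev[of _ _ _ _ 0]) (use pi X d c n0 in \<open>auto simp: p_def pt_def ev_def\<close>)
    have comm: "p + ev k + ev i = p + ev i + ev k" by (simp add: ac_simps)
    have 1: "D k j (p + ev i) = A i (Suc c) j k"
      by (rule AD) (use d c pi pik in \<open>auto simp: p_def pt_def ev_def\<close>)
    have 2: "D k j p = A i c j k"
      by (rule AD) (use d c p pk in \<open>auto simp: p_def pt_def ev_def\<close>)
    have pki: "p + ev k + ev i \<in> X" unfolding comm by (rule pik)
    have 3: "D i j (p + ev k) = A k 1 j i"
      by (rule AD) (use d n0 pk pki in \<open>auto simp: p_def pt_def ev_def\<close>)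
    have 4: "D i j p = A k 0 j i"
      by (rule AD) (use d n0 p pi in \<open>auto simp: p_def pt_def ev_def\<close>)
    have 5: "D k j (p + ev i) - D k j p = D i j (p + ev k) - D i j p"
      unfolding D_def comm by simp
    show ?thesis using 1 2 3 4 5 by simp
  qed
  define T where "T j k i = A i 1 j k - A i 0 j k" for j k i
  have Tsym: "T j k i = T j i k" if "i < d" "j < d" "k < d" "i \<noteq> j" "i \<noteq> k" "j \<noteq> k" for i j k
    using step[OF that, of 0] n0 unfolding T_def by simp
  have Tanti: "T j k i = - T k j i" if "i < d" "j < d" "k < d" "i \<noteq> j" "i \<noteq> k" "j \<noteq> k" for i j k
  proof -
    have "A i 1 j k = - A i 1 k j" using Ask[of i 1 j k] that n0 by simp
    moreover have "A i 0 j k = - A i 0 k j" using Ask[of i 0 j k] that n0 by simp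
    ultimately show ?thesis unfolding T_def by simp
  qed
  have T0: "T j k i = 0" if "i < d" "j < d" "k < d" "i \<noteq> j" "i \<noteq> k" "j \<noteq> k" for i j k
  proof -
    have "T j k i = T j i k" using Tsym that by blast
    also have "\<dots> = - T i j k" using Tanti that by blast
    also have "\<dots> = - T i k j" using Tsym[of j i k] that by simp
    also have "\<dots> = T k i j" using Tanti[of j i k] that by simp
    also have "\<dots> = T k j i" using Tsym[of j k i] that by simp
    also have "\<dots> = - T j k i" using Tanti[of i k j] that by simp
    finally show ?thesis by simp
  qed
  have Aconst: "c < n \<longrightarrow> A i c j k = A i 0 j k"
    if "i < d" "j < d" "k < d" "i \<noteq> j" "i \<noteq> k" "j \<noteq> k" for i j k c
  proof (induction c)
    case 0 then show ?case by simp
  next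
    case (Suc c)
    show ?case
    proof
      assume c: "Suc c < n"
      have "A i (Suc c) j k - A i c j k = T j i k" using step[OF that c] unfolding T_def by simp
      also have "\<dots> = 0" using T0[of k j i] that by simp
      finally show "A i (Suc c) j k = A i 0 j k" using Suc c by simp
    qed
  qed
  have third: "\<exists>i<d. i \<noteq> j \<and> i \<noteq> k" for j k :: nat
  proof -
    have "\<exists>i<3. i \<noteq> j \<and> i \<noteq> k" by presburger
    then show ?thesis using assms(1) by (meson less_le_trans)
  qed
  have z: "(0::nat\<Rightarrow>real) \<in> X" unfolding X using n0(1) by (rule L_zero)
  have zk: "(0::nat\<Rightarrow>real) + ev k \<in> X" if "k < d" for k
    unfolding X by (rule L_add_ev[of _ _ _ _ 0]) (use z X that n0 in auto)
  define M where "M j k = D k j 0" for j k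
  have MD: "D k j x = M j k" if hx: "x \<in> X" "j < d" "k < d" "x + ev k \<in> X" for x j k
  proof -
    obtain i where i: "i < d" "i \<noteq> j" "i \<noteq> k" using third by blast
    obtain c where c: "c < n" "x i = real c" using L_coord[of x d n i] hx(1) X i by auto
    have 1: "D k j x = A i c j k" using AD[of i c j k x] i c hx by simp
    have 2: "M j k = A i 0 j k" unfolding M_def using AD[of i 0 j k 0] i n0 hx z zk by simp
    show ?thesis
    proof (cases "j = k")
      case True
      then show ?thesis using 1 2 Ask[of i c j k] Ask[of i 0 j k] i c n0 hx by simp
    next
      case False
      then show ?thesis using 1 2 Aconst[of i j k c] i c hx by simp
    qed
  qed
  have Msk: "M j k = - M k j" if hx: "j < d" "k < d" for j k
  proof -
    obtain i where i: "i < d" "i \<noteq> j" "i \<noteq> k" using third by blast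
    have 1: "M j k = A i 0 j k" unfolding M_def using AD[of i 0 j k 0] i n0 hx z zk by simp
    have 2: "M k j = A i 0 k j" unfolding M_def using AD[of i 0 k j 0] i n0 hx z zk by simp
    show ?thesis using 1 2 Ask[of i 0 j k] i n0 hx by simp
  qed
  define f where "f x = (\<lambda>j. if j < d then g 0 j + (\<Sum>k<d. M j k * x k) else 0)" for x
  have sm: "space_motion d f"
    unfolding space_motion_def
  proof (intro conjI ballI)
    fix x assume "x \<in> rvec d" then show "f x \<in> rvec d" by (simp add: f_def rvec_def)
  next
    fix x y assume "x \<in> rvec d" "y \<in> rvec d"
    have "ip d (f x - f y) (x - y) = (\<Sum>j<d. (\<Sum>k<d. M j k * (x - y) k) * (x - y) j)"
      unfolding ip_def f_def by (intro sum.cong refl) (simp add: sum_subtractf algebra_simps)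
    also have "\<dots> = 0" by (rule skew_quad) (rule Msk)
    finally show "ip d (f x - f y) (x - y) = 0" .
  qed
  define tr where "tr (m::nat) (x::nat\<Rightarrow>real) = (\<lambda>l::nat. if l < m then x l else (0::real))" for m x
  have walk: "m \<le> d \<longrightarrow> g (tr m x) j = g 0 j + (\<Sum>k<m. M j k * x k)"
    if x: "x \<in> X" and j: "j < d" for x j m
  proof (induction m)
    case 0
    have "tr 0 x = 0" by (simp add: tr_def fun_eq_iff)
    then show ?case by simp
  next
    case (Suc m)
    show ?case
    proof
      assume m: "Suc m \<le> d"
      obtain c where c: "c < n" "x m = real c" using L_coord[of x d n m] x X m by auto
      have trX: "(tr m x)(m := real t) \<in> X" if "t < n" for t
        unfolding X
      proof (rule L_intro)
        show "\<forall>l<d. \<exists>ma<n. ((tr m x)(m := real t)) l = real ma"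
          using that L_coord[of x d n] x X n0 by (auto simp: tr_def)
        show "\<forall>l\<ge>d. ((tr m x)(m := real t)) l = 0" using m by (auto simp: tr_def)
      qed
      have inner: "t \<le> c \<longrightarrow> g ((tr m x)(m := real t)) j = g (tr m x) j + real t * M j m" for t
      proof (induction t)
        case 0
        have "(tr m x)(m := real 0) = tr m x" by (simp add: tr_def fun_eq_iff)
        then show ?case by simp
      next
        case (Suc t)
        show ?case
        proof
          assume t: "Suc t \<le> c"
          have e: "(tr m x)(m := real t) + ev m = (tr m x)(m := real (Suc t))"
            by (simp add: tr_def ev_def fun_eq_iff)
          have "D m j ((tr m x)(m := real t)) = M j m"
            by (rule MD) (use trX[of t] trX[of "Suc t"] e t c j m in auto)
          then show "g ((tr m x)(m := real (Suc t))) j = g (tr m x) j + real (Suc t) * M j m"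
            using Suc t e unfolding D_def by (simp add: algebra_simps)
        qed
      qed
      have "(tr m x)(m := real c) = tr (Suc m) x" using c by (simp add: tr_def fun_eq_iff)
      then show "g (tr (Suc m) x) j = g 0 j + (\<Sum>k<Suc m. M j k * x k)"
        using inner[of c] Suc m c by (simp add: algebra_simps zero_fun_def)
    qed
  qed
  have agree: "g x = f x" if x: "x \<in> X" for x
  proof
    fix j show "g x j = f x j"
    proof (cases "j < d")
      case True
      have "tr d x = x" using L_out[of x d n] x X by (auto simp: tr_def fun_eq_iff)
      then show ?thesis using walk[OF x True, of d] True by (simp add: f_def)
    next
      case False
      have "g x \<in> rvec d" using gm x by (simp add: framework_motion_def)
      then show ?thesis using False by (simp add: f_def rvec_def)
    qed
  qed
  show "\<exists>f. space_motion d f \<and> (\<forall>x\<in>X. g x = f x)" using sm agree by blast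
qed

end
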